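(* Let $H,\Delta\in\mathbb{C}^{n\times n}$ be Hermitian, let $H(t)=H+t\Delta$ for $t\in\mathbb{R}$, and let $f\in\mathbb{C}^n$ with $\|f\|_2=1$. If $\|\Delta\|_2|t|<\gamma(H)/2$, then \[ W_1\big(\mu_f^{H},\mu_f^{H(t)}\big)\le n\,\|\Delta\|_2\,|t| + \mathcal{O}\big((t\|\Delta\|_2)^2\big)\quad\text{as } t\to 0 . \]
   Context: For a Hermitian matrix $M$ with distinct eigenvalues $\mathrm{spec}(M)$ and orthogonal eigenprojections $P_\lambda$, and a unit vector $f$, the power spectrum is $\mu_f^M=\sum_{\lambda\in\mathrm{spec}(M)}\langle f,P_\lambda f\rangle\delta_\lambda$, a probability measure on $\mathbb{R}$; $W_1$ is the 1-Wasserstein distance on $\mathbb{R}$; $\|\cdot\|_2$ is the spectral norm. $\gamma(H)=\min\{|\lambda-\mu|:\lambda\neq\mu,\ \lambda,\mu\in\mathrm{spec}(H)\}$ is the minimal gap between distinct eigenvalues of $H$. *)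

theory Defs
  imports "HOL-Analysis.Analysis" "HOL-Library.Landau_Symbols"
begin

text \<open>Matrices in C^{n x n} are represented as complex^'n^'n, vectors in C^n as complex^'n
  (n = CARD('n)). The norm on complex^'n is the Euclidean (l2) norm.\<close>

definition hermitian :: "complex^'n^'n \<Rightarrow> bool" where
  "hermitian M \<longleftrightarrow> (\<forall>i j. M $ i $ j = cnj (M $ j $ i))"

definition cinner :: "complex^'n \<Rightarrow> complex^'n \<Rightarrow> complex" where
  "cinner x y = (\<Sum>i\<in>UNIV. cnj (x $ i) * y $ i)"

definition spec_norm :: "complex^'n^'n \<Rightarrow> real" where
  "spec_norm M = onorm (\<lambda>x. M *v x)"

definition spec :: "complex^'n^'n \<Rightarrow> real set" where
  "spec M = {l. \<exists>v. v \<noteq> 0 \<and> M *v v = complex_of_real l *s v}"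

definition eigenspace :: "complex^'n^'n \<Rightarrow> real \<Rightarrow> (complex^'n) set" where
  "eigenspace M l = {v. M *v v = complex_of_real l *s v}"

definition eigproj :: "complex^'n^'n \<Rightarrow> real \<Rightarrow> complex^'n \<Rightarrow> complex^'n" where
  "eigproj M l f = (THE p. p \<in> eigenspace M l \<and> (\<forall>v\<in>eigenspace M l. cinner v (f - p) = 0))"

definition gap :: "complex^'n^'n \<Rightarrow> real" where
  "gap H = Inf {\<bar>l - m\<bar> | l m. l \<in> spec H \<and> m \<in> spec H \<and> l \<noteq> m}"

text \<open>Power spectrum mu_f^M, represented by its (finitely supported) weight function:
  the measure is sum over l in spec M of w(l) * delta_l.\<close>
definition power_spectrum :: "complex^'n^'n \<Rightarrow> complex^'n \<Rightarrow> real \<Rightarrow> real" where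
  "power_spectrum M f = (\<lambda>l. if l \<in> spec M then Re (cinner f (eigproj M l f)) else 0)"

text \<open>1-Wasserstein distance between two finitely supported probability measures on R,
  given by weight functions p, q: infimum of the transport cost over all couplings.
  (Every coupling of such measures is supported on supp p x supp q.)\<close>
definition W1 :: "(real \<Rightarrow> real) \<Rightarrow> (real \<Rightarrow> real) \<Rightarrow> real" where
  "W1 p q = Inf {(\<Sum>(a,b)\<in>{x. p x \<noteq> 0} \<times> {x. q x \<noteq> 0}. \<pi> (a,b) * \<bar>a - b\<bar>) | \<pi>.
      (\<forall>z. 0 \<le> \<pi> z) \<and>
      (\<forall>a. p a \<noteq> 0 \<longrightarrow> (\<Sum>b\<in>{x. q x \<noteq> 0}. \<pi> (a,b)) = p a) \<and>
      (\<forall>b. q b \<noteq> 0 \<longrightarrow> (\<Sum>a\<in>{x. p x \<noteq> 0}. \<pi> (a,b)) = q b)}"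

end

theory Submission
  imports Defs
begin


lemma cinner_add_right: "cinner x (y + z) = cinner x y + cinner x z"
  by (simp add: cinner_def distrib_left sum.distrib)
lemma cinner_add_left: "cinner (x + y) z = cinner x z + cinner y z"
  by (simp add: cinner_def distrib_right sum.distrib)
lemma cinner_diff_right: "cinner x (y - z) = cinner x y - cinner x z"
  by (simp add: cinner_def right_diff_distrib sum_subtractf)
lemma cinner_diff_left: "cinner (x - y) z = cinner x z - cinner y z"
  by (simp add: cinner_def left_diff_distrib sum_subtractf)
lemma cinner_zero_right[simp]: "cinner x 0 = 0" by (simp add: cinner_def)
lemma cinner_zero_left[simp]: "cinner 0 x = 0" by (simp add: cinner_def)
lemma cinner_scale_right: "cinner x (c *s y) = c * cinner x y"
  by (simp add: cinner_def sum_distrib_left algebra_simps)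
lemma cinner_scale_left: "cinner (c *s x) y = cnj c * cinner x y"
  by (simp add: cinner_def sum_distrib_left algebra_simps)
lemma cinner_scaleR_right: "cinner x (r *\<^sub>R y) = of_real r * cinner x y"
  unfolding cinner_def sum_distrib_left
  apply (intro sum.cong refl)
  apply (simp only: vector_scaleR_component)
  apply (simp add: scaleR_conv_of_real)
  done
lemma cinner_neg_right: "cinner x (- y) = - cinner x y"
  by (simp add: cinner_def sum_negf)
lemma cinner_sum_right: "finite S \<Longrightarrow> cinner x (sum g S) = (\<Sum>s\<in>S. cinner x (g s))"
  apply (induction S rule: finite_induct) 
   apply (simp add: cinner_def)
  apply (simp add: cinner_add_right)
  done
lemma cinner_sum_left: "finite S \<Longrightarrow> cinner (sum g S) x = (\<Sum>s\<in>S. cinner (g s) x)"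
  apply (induction S rule: finite_induct) 
   apply (simp add: cinner_def)
  apply (simp add: cinner_add_left)
  done
lemma cinner_commute: "cinner y x = cnj (cinner x y)"
  by (simp add: cinner_def mult.commute)

lemma inner_cinner: "x \<bullet> y = Re (cinner x y)"
  by (simp add: inner_vec_def cinner_def inner_complex_def Re_sum)

lemma cinner_self: "cinner x x = complex_of_real ((norm x)\<^sup>2)"
proof -
  have "(norm x)\<^sup>2 = x \<bullet> x" by (simp add: power2_norm_eq_inner)
  also have "... = (\<Sum>i\<in>UNIV. (cmod (x$i))\<^sup>2)"
    by (simp add: inner_vec_def power2_norm_eq_inner)
  finally have e: "(norm x)\<^sup>2 = (\<Sum>i\<in>UNIV. (cmod (x$i))\<^sup>2)" .
  have "cinner x x = (\<Sum>i\<in>UNIV. complex_of_real ((cmod (x$i))\<^sup>2))"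
    unfolding cinner_def by (intro sum.cong refl) (metis complex_norm_square mult.commute of_real_power)
  then show ?thesis by (simp add: e)
qed

lemma cinner_self_eq_0: "cinner x x = 0 \<longleftrightarrow> x = 0"
  by (simp add: cinner_self)

lemma cinner_cauchy: "cmod (cinner x y) \<le> norm x * norm y"
proof -
  define u :: "real^'a" where "u = (\<chi> i. cmod (x$i))"
  define w :: "real^'a" where "w = (\<chi> i. cmod (y$i))"
  have nu: "norm u = norm x" unfolding u_def by (simp add: norm_vec_def)
  have nw: "norm w = norm y" unfolding w_def by (simp add: norm_vec_def)
  have "cmod (cinner x y) \<le> (\<Sum>i\<in>UNIV. cmod (cnj (x$i) * y$i))"
    unfolding cinner_def by (rule norm_sum)
  also have "... = u \<bullet> w" by (simp add: u_def w_def inner_vec_def norm_mult)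
  also have "... \<le> norm u * norm w" by (rule norm_cauchy_schwarz)
  finally show ?thesis by (simp add: nu nw)
qed

lemma mv_add: "(M::complex^'n^'m) *v (x + y) = M *v x + M *v y"
  by (simp add: matrix_vector_right_distrib)
lemma mv_scaleR: "(M::complex^'n^'m) *v (r *\<^sub>R x) = r *\<^sub>R (M *v x)"
  by (simp add: vec_eq_iff matrix_vector_mult_def scaleR_sum_right)
lemma mv_scale: "(M::complex^'n^'m) *v (c *s x) = c *s (M *v x)"
  by (simp add: vec_eq_iff matrix_vector_mult_def sum_distrib_left algebra_simps)
lemma mv_madd: "((M::complex^'n^'m) + N) *v x = M *v x + N *v x"
  by (simp add: matrix_vector_mult_def vec_eq_iff distrib_right sum.distrib)
lemma mv_mscaleR: "(r *\<^sub>R (M::complex^'n^'m)) *v x = r *\<^sub>R (M *v x)"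
  by (simp add: vec_eq_iff matrix_vector_mult_def scaleR_sum_right)

lemma mv_linear: "linear (\<lambda>x. (M::complex^'n^'m) *v x)"
  by (rule linearI) (simp_all add: mv_add mv_scaleR)
lemma mv_bounded_linear: "bounded_linear (\<lambda>x. (M::complex^'n^'m) *v x)"
  using mv_linear linear_conv_bounded_linear by blast

lemma hermitian_cinner: assumes "hermitian M"
  shows "cinner (M *v x) y = cinner x (M *v y)"
proof -
  have "cinner (M *v x) y = (\<Sum>i\<in>UNIV. \<Sum>j\<in>UNIV. cnj (M$i$j) * cnj (x$j) * y$i)"
    by (simp add: cinner_def matrix_vector_mult_def sum_distrib_right cnj_sum)
  also have "... = (\<Sum>j\<in>UNIV. \<Sum>i\<in>UNIV. cnj (x$j) * (M$j$i * y$i))"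
  proof (subst sum.swap, intro sum.cong refl)
    fix i j
    have "M$j$i = cnj (M$i$j)" using assms unfolding hermitian_def by blast
    then have h: "cnj (M$i$j) = M$j$i" by simp
    show "cnj (M$i$j) * cnj (x$j) * y$i = cnj (x$j) * (M$j$i * y$i)"
      unfolding h by (simp only: mult_ac)
  qed
  also have "... = cinner x (M *v y)"
    by (simp add: cinner_def matrix_vector_mult_def sum_distrib_left)
  finally show ?thesis .
qed

lemma hermitian_inner: assumes "hermitian M"
  shows "(M *v x) \<bullet> y = x \<bullet> (M *v y)"
  using hermitian_cinner[OF assms] by (simp add: inner_cinner)

lemma hermitian_add: assumes "hermitian M" "hermitian N" shows "hermitian (M + N)"
  unfolding hermitian_def
proof (intro allI)
  fix i j
  have "M$i$j = cnj (M$j$i)" "N$i$j = cnj (N$j$i)" using assms unfolding hermitian_def by blast+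
  then show "(M + N)$i$j = cnj ((M + N)$j$i)" by simp
qed
lemma hermitian_scaleR: assumes "hermitian M" shows "hermitian (r *\<^sub>R M)"
  unfolding hermitian_def
proof (intro allI)
  fix i j
  have "M$i$j = cnj (M$j$i)" using assms unfolding hermitian_def by blast
  then show "(r *\<^sub>R M)$i$j = cnj ((r *\<^sub>R M)$j$i)" by simp
qed



lemma eigvec_exists:
  fixes M :: "complex^'n^'n"
  assumes herm: "hermitian M" and S: "subspace S" and inv: "\<forall>x\<in>S. M *v x \<in> S"
    and ne: "S \<noteq> {0}"
  shows "\<exists>v\<in>S. v \<noteq> 0 \<and> (\<exists>l::real. M *v v = l *\<^sub>R v)"
proof -
  let ?K = "S \<inter> sphere 0 1"
  have cK: "compact ?K" by (intro closed_Int_compact closed_subspace S compact_sphere)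
  obtain y where y: "y \<in> S" "y \<noteq> 0" using ne S subspace_0 by blast
  have "(1 / norm y) *\<^sub>R y \<in> ?K" using y S by (simp add: subspace_scale)
  then have neK: "?K \<noteq> {}" by blast
  have cT: "continuous_on UNIV (\<lambda>x. M *v x)"
    by (rule linear_continuous_on[OF mv_bounded_linear])
  have cphi: "continuous_on ?K (\<lambda>x. x \<bullet> (M *v x))"
    by (intro continuous_intros continuous_on_subset[OF cT]) auto
  obtain x0 where x0: "x0 \<in> ?K" and mx: "\<forall>y\<in>?K. y \<bullet> (M *v y) \<le> x0 \<bullet> (M *v x0)"
    using continuous_attains_sup[OF cK neK cphi] by blast
  define l where "l = x0 \<bullet> (M *v x0)"
  have x0S: "x0 \<in> S" and nx0: "norm x0 = 1" using x0 by auto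
  have x0x0: "x0 \<bullet> x0 = 1" using nx0 by (simp add: norm_eq_1)
  have Q: "y \<bullet> (M *v y) \<le> l * (y \<bullet> y)" if "y \<in> S" for y
  proof (cases "y = 0")
    case True then show ?thesis by (simp add: matrix_vector_mult_0_right)
  next
    case False
    define u where "u = (1 / norm y) *\<^sub>R y"
    have "u \<in> ?K" using that False S by (simp add: u_def subspace_scale)
    then have "u \<bullet> (M *v u) \<le> l" using mx l_def by blast
    moreover have "u \<bullet> (M *v u) = (y \<bullet> (M *v y)) / (norm y)\<^sup>2"
      by (simp add: u_def mv_scaleR power2_eq_square)
    ultimately have "(y \<bullet> (M *v y)) / (norm y)\<^sup>2 \<le> l" by simp
    then show ?thesis using False by (simp add: divide_le_eq power2_norm_eq_inner mult.commute)
  qed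
  define z where "z = M *v x0 - l *\<^sub>R x0"
  have zS: "z \<in> S" using x0S inv S by (simp add: z_def subspace_diff subspace_scale)
  define q where "q = z \<bullet> (M *v z) - l * (z \<bullet> z)"
  have q: "q \<le> 0" using Q[OF zS] by (simp add: q_def)
  have sym: "(M *v a) \<bullet> b = a \<bullet> (M *v b)" for a b using hermitian_inner[OF herm] .
  have key: "2 * s * (z \<bullet> z) + s\<^sup>2 * q \<le> 0" for s
  proof -
    have "x0 + s *\<^sub>R z \<in> S" using x0S zS S by (simp add: subspace_add subspace_scale)
    from Q[OF this] have A: "(x0 + s *\<^sub>R z) \<bullet> (M *v (x0 + s *\<^sub>R z)) \<le> l * ((x0 + s *\<^sub>R z) \<bullet> (x0 + s *\<^sub>R z))" .
    have a: "x0 \<bullet> (M *v z) = z \<bullet> z + l * (x0 \<bullet> z)"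
    proof -
      have "x0 \<bullet> (M *v z) = (M *v x0) \<bullet> z" using sym[of x0 z] by simp
      then show ?thesis by (simp add: z_def inner_diff_left inner_commute algebra_simps)
    qed
    have e1: "(x0 + s *\<^sub>R z) \<bullet> (M *v (x0 + s *\<^sub>R z)) = l + 2 * s * (x0 \<bullet> (M *v z)) + s\<^sup>2 * (z \<bullet> (M *v z))"
      using sym[of z x0] by (simp add: mv_add mv_scaleR inner_add_left inner_add_right l_def inner_commute power2_eq_square algebra_simps)
    have e2: "(x0 + s *\<^sub>R z) \<bullet> (x0 + s *\<^sub>R z) = 1 + 2 * s * (x0 \<bullet> z) + s\<^sup>2 * (z \<bullet> z)"
      using x0x0 by (simp add: inner_add_left inner_add_right inner_commute power2_eq_square algebra_simps)
    have "(x0 + s *\<^sub>R z) \<bullet> (M *v (x0 + s *\<^sub>R z)) - l * ((x0 + s *\<^sub>R z) \<bullet> (x0 + s *\<^sub>R z))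
       = 2 * s * (z \<bullet> z) + s\<^sup>2 * q"
      unfolding e1 e2 a q_def by (simp add: algebra_simps)
    then show ?thesis using A by linarith
  qed
  have "z \<bullet> z = 0"
  proof (rule ccontr)
    assume "z \<bullet> z \<noteq> 0"
    then have zz: "z \<bullet> z > 0" by (simp add: order_less_le)
    define s where "s = (z \<bullet> z) / (1 - q)"
    have s: "s > 0" using zz q by (simp add: s_def)
    have "2 * s * (z \<bullet> z) + s\<^sup>2 * q \<le> 0" by (rule key)
    then have "s * (2 * (z \<bullet> z) + s * q) \<le> 0" by (simp add: power2_eq_square algebra_simps)
    then have "2 * (z \<bullet> z) + s * q \<le> 0" using s by (simp add: mult_le_0_iff)
    moreover have "s * q \<ge> - (z \<bullet> z)"
    proof -
      have "s * q = (z \<bullet> z) * (q / (1 - q))" by (simp add: s_def)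
      moreover have "q / (1 - q) \<ge> -1" using q by (simp add: field_simps)
      ultimately show ?thesis using zz
        by (metis mult.commute mult_left_mono mult_minus1_right less_eq_real_def)
    qed
    ultimately show False using zz by linarith
  qed
  then have "M *v x0 = l *\<^sub>R x0" by (simp add: z_def)
  moreover have "x0 \<noteq> 0" using nx0 by auto
  ultimately show ?thesis using x0S by blast
qed

definition EV :: "complex^'n^'n \<Rightarrow> (complex^'n) set" where
  "EV M = {v. \<exists>l::real. M *v v = l *\<^sub>R v}"

lemma spectral_subspace:
  fixes M :: "complex^'n^'n"
  assumes herm: "hermitian M"
  shows "subspace S \<Longrightarrow> (\<forall>x\<in>S. M *v x \<in> S) \<Longrightarrow> S \<subseteq> span (EV M)"
proof (induction "dim S" arbitrary: S rule: less_induct)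
  case less
  show ?case
  proof (cases "S = {0}")
    case True then show ?thesis by (simp add: span_0)
  next
    case False
    obtain v l where v: "v \<in> S" "v \<noteq> 0" "M *v v = l *\<^sub>R v"
      using eigvec_exists[OF herm less.prems False] by blast
    define S' where "S' = {y\<in>S. v \<bullet> y = 0}"
    have sub': "subspace S'" using less.prems(1) unfolding S'_def subspace_def
      by (auto simp: inner_add_right)
    have inv': "\<forall>x\<in>S'. M *v x \<in> S'"
    proof
      fix x assume x: "x \<in> S'"
      have "v \<bullet> (M *v x) = (M *v v) \<bullet> x" using hermitian_inner[OF herm, of v x] by simp
      also have "... = l * (v \<bullet> x)" using v by simp
      finally show "M *v x \<in> S'" using x less.prems(2) by (simp add: S'_def)
    qed
    have "v \<notin> S'" using v by (simp add: S'_def)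
    moreover have "S' \<subseteq> S" by (auto simp: S'_def)
    ultimately have "S' \<subset> S" using v(1) by blast
    then have "span S' \<subset> span S"
    proof -
      have e1: "span S' = S'" and e2: "span S = S" using sub' less.prems(1) span_eq_iff by blast+
      show ?thesis unfolding e1 e2 by (rule \<open>S' \<subset> S\<close>)
    qed
    then have "dim S' < dim S" by (rule dim_psubset)
    then have IH: "S' \<subseteq> span (EV M)" using less.hyps sub' inv' by blast
    show ?thesis
    proof
      fix y assume y: "y \<in> S"
      define c where "c = (v \<bullet> y) / (v \<bullet> v)"
      have vv: "v \<bullet> v \<noteq> 0" using v by simp
      have "y - c *\<^sub>R v \<in> S'" using y v less.prems(1) vv
        by (simp add: S'_def c_def subspace_diff subspace_scale inner_diff_right)
      then have "y - c *\<^sub>R v \<in> span (EV M)" using IH by blast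
      moreover have "v \<in> span (EV M)" using v by (auto simp: EV_def intro: span_base)
      ultimately have "(y - c *\<^sub>R v) + c *\<^sub>R v \<in> span (EV M)"
        by (intro span_add span_scale)
      then show "y \<in> span (EV M)" by simp
    qed
  qed
qed

lemma spectral_UNIV:
  fixes M :: "complex^'n^'n"
  assumes herm: "hermitian M"
  shows "span (EV M) = UNIV"
  using spectral_subspace[OF herm, of UNIV] by auto



lemma scaleR_vec_cs: "(r::real) *\<^sub>R (v::complex^'n) = complex_of_real r *s v"
  by (simp only: vec_eq_iff vector_scaleR_component vector_smult_component) (simp add: scaleR_conv_of_real)

lemma eig_add: "u \<in> eigenspace M l \<Longrightarrow> w \<in> eigenspace M l \<Longrightarrow> u + w \<in> eigenspace M l"
  by (simp add: eigenspace_def mv_add vector_ssub_ldistrib)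
lemma eig_zero: "0 \<in> eigenspace M l"
  by (simp add: eigenspace_def matrix_vector_mult_0_right)
lemma eig_scale: "u \<in> eigenspace M l \<Longrightarrow> c *s u \<in> eigenspace M l"
  by (simp add: eigenspace_def mv_scale vector_smult_assoc mult.commute)
lemma eig_scaleR: "u \<in> eigenspace M l \<Longrightarrow> r *\<^sub>R u \<in> eigenspace M l"
  by (simp add: scaleR_vec_cs eig_scale)
lemma eig_subspace: "subspace (eigenspace M l)"
  unfolding subspace_def using eig_add eig_zero eig_scaleR by blast
lemma eig_sum: "finite S \<Longrightarrow> (\<And>s. s \<in> S \<Longrightarrow> g s \<in> eigenspace M l) \<Longrightarrow> sum g S \<in> eigenspace M l"
  using subspace_sum[OF eig_subspace] by blast

lemma eig_orth:
  assumes herm: "hermitian M" and u: "u \<in> eigenspace M l" and w: "w \<in> eigenspace M m" and lm: "l \<noteq> m"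
  shows "cinner u w = 0"
proof -
  have "cinner (M *v u) w = complex_of_real l * cinner u w"
    using u by (simp add: eigenspace_def cinner_scale_left)
  moreover have "cinner u (M *v w) = complex_of_real m * cinner u w"
    using w by (simp add: eigenspace_def cinner_scale_right)
  ultimately have "complex_of_real l * cinner u w = complex_of_real m * cinner u w"
    using hermitian_cinner[OF herm] by metis
  then have "(complex_of_real l - complex_of_real m) * cinner u w = 0" by (simp add: algebra_simps)
  then show ?thesis using lm by simp
qed

lemma decomp_exists:
  fixes M :: "complex^'n^'n"
  assumes herm: "hermitian M"
  shows "\<exists>L x. finite L \<and> (\<forall>l. x l \<in> eigenspace M l) \<and> f = (\<Sum>l\<in>L. x l)"
proof -
  have "f \<in> span (EV M)" using spectral_UNIV[OF herm] by simp
  then obtain T r where T: "finite T" "T \<subseteq> EV M" and f: "f = (\<Sum>v\<in>T. r v *\<^sub>R v)"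
    unfolding span_explicit by blast
  have "\<forall>v\<in>EV M. \<exists>l::real. M *v v = l *\<^sub>R v" unfolding EV_def by blast
  then obtain lam where lam: "\<And>v. v \<in> EV M \<Longrightarrow> M *v v = lam v *\<^sub>R v" by metis
  define x where "x l = (\<Sum>v\<in>{v\<in>T. lam v = l}. r v *\<^sub>R v)" for l
  have "x l \<in> eigenspace M l" for l
    unfolding x_def
  proof (rule eig_sum)
    show "finite {v \<in> T. lam v = l}" using T by simp
    fix v assume v: "v \<in> {v \<in> T. lam v = l}"
    then have "v \<in> eigenspace M l" using lam T by (auto simp: eigenspace_def scaleR_vec_cs)
    then show "r v *\<^sub>R v \<in> eigenspace M l" by (rule eig_scaleR)
  qed
  moreover have "f = (\<Sum>l\<in>lam ` T. x l)"
    unfolding f x_def using sum.image_gen[OF T(1), of "\<lambda>v. r v *\<^sub>R v" lam] by simp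
  ultimately show ?thesis using T by blast
qed

lemma proj_unique:
  assumes "p \<in> eigenspace M l" "\<forall>v\<in>eigenspace M l. cinner v (f - p) = 0"
    "p' \<in> eigenspace M l" "\<forall>v\<in>eigenspace M l. cinner v (f - p') = 0"
  shows "p = p'"
proof -
  have d: "p - p' \<in> eigenspace M l" using assms(1,3) subspace_diff[OF eig_subspace] by blast
  have "cinner (p - p') (f - p') - cinner (p - p') (f - p) = 0" using assms(2,4) d by simp
  then have "cinner (p - p') (p - p') = 0" by (simp add: cinner_diff_right)
  then show ?thesis by (simp add: cinner_self_eq_0)
qed

lemma proj_char:
  fixes M :: "complex^'n^'n"
  assumes herm: "hermitian M" and L: "finite L" and x: "\<forall>l. x l \<in> eigenspace M l"
    and f: "f = (\<Sum>l\<in>L. x l)"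
  shows "eigproj M l0 f = (if l0 \<in> L then x l0 else 0)"
proof -
  define p where "p = (if l0 \<in> L then x l0 else 0)"
  have pE: "p \<in> eigenspace M l0" unfolding p_def using x eig_zero[of M l0] by simp
  have fp: "f - p = (\<Sum>l\<in>L - {l0}. x l)"
    using L by (simp add: f p_def sum_diff1)
  have orth: "\<forall>v\<in>eigenspace M l0. cinner v (f - p) = 0"
  proof
    fix v assume v: "v \<in> eigenspace M l0"
    have "cinner v (f - p) = (\<Sum>l\<in>L - {l0}. cinner v (x l))"
      unfolding fp using L by (simp add: cinner_sum_right)
    also have "... = 0"
    proof (intro sum.neutral ballI)
      fix m assume "m \<in> L - {l0}"
      then have "l0 \<noteq> m" by auto
      then show "cinner v (x m) = 0" using eig_orth[OF herm v, of "x m" m] x by blast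
    qed
    finally show "cinner v (f - p) = 0" .
  qed
  have "eigproj M l0 f = p"
    unfolding eigproj_def
  proof (rule the_equality)
    show "p \<in> eigenspace M l0 \<and> (\<forall>v\<in>eigenspace M l0. cinner v (f - p) = 0)" using pE orth by blast
    fix q assume "q \<in> eigenspace M l0 \<and> (\<forall>v\<in>eigenspace M l0. cinner v (f - q) = 0)"
    then show "q = p" using proj_unique pE orth by blast
  qed
  then show ?thesis by (simp add: p_def)
qed

lemma proj_props:
  fixes M :: "complex^'n^'n"
  assumes herm: "hermitian M"
  shows "eigproj M l f \<in> eigenspace M l \<and> (\<forall>v\<in>eigenspace M l. cinner v (f - eigproj M l f) = 0)"
proof -
  obtain L x where Lx: "finite L" "\<forall>l. x l \<in> eigenspace M l" "f = (\<Sum>l\<in>L. x l)"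
    using decomp_exists[OF herm] by blast
  define p where "p = (if l \<in> L then x l else 0)"
  have e: "eigproj M l f = p" using proj_char[OF herm Lx] by (simp add: p_def)
  have pE: "p \<in> eigenspace M l" unfolding p_def using Lx(2) eig_zero[of M l] by simp
  have fp: "f - p = (\<Sum>m\<in>L - {l}. x m)"
    using Lx by (simp add: p_def sum_diff1)
  have "\<forall>v\<in>eigenspace M l. cinner v (f - p) = 0"
  proof
    fix v assume v: "v \<in> eigenspace M l"
    have "cinner v (f - p) = (\<Sum>m\<in>L - {l}. cinner v (x m))"
      unfolding fp using Lx by (simp add: cinner_sum_right)
    also have "... = 0"
    proof (intro sum.neutral ballI)
      fix m assume "m \<in> L - {l}"
      then have "l \<noteq> m" by auto
      then show "cinner v (x m) = 0" using eig_orth[OF herm v, of "x m" m] Lx(2) by blast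
    qed
    finally show "cinner v (f - p) = 0" .
  qed
  then show ?thesis using e pE by simp
qed

lemma not_spec_eig: "l \<notin> spec M \<Longrightarrow> v \<in> eigenspace M l \<Longrightarrow> v = 0"
  by (auto simp: spec_def eigenspace_def)

lemma spec_finite_card:
  fixes M :: "complex^'n^'n"
  assumes herm: "hermitian M"
  shows "finite (spec M) \<and> card (spec M) \<le> CARD('n)"
proof -
  have "\<forall>l\<in>spec M. \<exists>v. v \<noteq> 0 \<and> v \<in> eigenspace M l"
    by (auto simp: spec_def eigenspace_def)
  then obtain vv where vv: "\<And>l. l \<in> spec M \<Longrightarrow> vv l \<noteq> 0 \<and> vv l \<in> eigenspace M l" by metis
  define W1s where "W1s = vv ` spec M"
  define W2s where "W2s = (\<lambda>l. \<i> *s vv l) ` spec M"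
  have orth_gen: "cinner (c1 *s vv l) (c2 *s vv m) = 0" if "l \<in> spec M" "m \<in> spec M" "l \<noteq> m" for c1 c2 l m
    using eig_orth[OF herm eig_scale[OF conjunct2[OF vv[OF that(1)]]] eig_scale[OF conjunct2[OF vv[OF that(2)]]] that(3)] .
  have orth_gen': "cinner (vv l) (vv m) = 0" "cinner (\<i> *s vv l) (vv m) = 0" "cinner (vv l) (\<i> *s vv m) = 0"
    if "l \<in> spec M" "m \<in> spec M" "l \<noteq> m" for l m
    using orth_gen[OF that, of 1 1] orth_gen[OF that, of "\<i>" 1] orth_gen[OF that, of 1 "\<i>"] by simp_all
  have self: "Re (cinner (vv l) (\<i> *s vv l)) = 0" "Re (cinner (\<i> *s vv l) (vv l)) = 0" for l
    by (simp_all add: cinner_scale_right cinner_scale_left cinner_self)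
  have nz0: "vv l \<noteq> 0" "\<i> *s vv l \<noteq> 0" if "l \<in> spec M" for l
    using vv[OF that] by (simp_all add: vector_mul_eq_0)
  have nz: "0 \<notin> W1s \<union> W2s" using nz0 unfolding W1s_def W2s_def by (metis UnE imageE)
  have cc: "Im (cinner (vv l) (vv m)) = 0 \<and> (vv l \<noteq> vv m \<longrightarrow> Re (cinner (vv l) (vv m)) = 0)"
    if "l \<in> spec M" "m \<in> spec M" for l m
  proof (cases "l = m")
    case True then show ?thesis by (simp add: cinner_self)
  next
    case False then show ?thesis using orth_gen'(1)[OF that False] by simp
  qed
  have po: "pairwise orthogonal (W1s \<union> W2s)"
    unfolding pairwise_def orthogonal_def inner_cinner W1s_def W2s_def
    using cc by (auto simp: cinner_scale_left cinner_scale_right)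
  have ind: "independent (W1s \<union> W2s)" by (rule pairwise_orthogonal_independent[OF po nz])
  from independent_bound[OF ind] have fin: "finite (W1s \<union> W2s)" and cardW: "card (W1s \<union> W2s) \<le> 2 * CARD('n)"
    by simp_all
  have inj1: "inj_on vv (spec M)"
  proof (rule inj_onI)
    fix l m assume "l \<in> spec M" "m \<in> spec M" "vv l = vv m"
    then show "l = m" using orth_gen'(1)[of l m] vv[of l] cinner_self_eq_0 by metis
  qed
  have inj2: "inj_on (\<lambda>l. \<i> *s vv l) (spec M)"
    using inj1 unfolding inj_on_def by (metis vector_smult_assoc complex_i_not_zero vector_smult_lid
      mult.commute divide_complex_def nonzero_mult_div_cancel_left)
  have disj: "W1s \<inter> W2s = {}"
  proof (rule ccontr)
    assume "W1s \<inter> W2s \<noteq> {}"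
    then obtain l m where lm: "l \<in> spec M" "m \<in> spec M" "vv l = \<i> *s vv m"
      by (auto simp: W1s_def W2s_def)
    show False
    proof (cases "l = m")
      case True
      have "Re (cinner (vv l) (vv l)) = Re (cinner (vv l) (\<i> *s vv l))" using lm True by simp
      then have "Re (cinner (vv l) (vv l)) = 0" using self by simp
      then have "norm (vv l) = 0" by (simp add: cinner_self)
      then show False using vv lm by simp
    next
      case False
      have "cinner (vv l) (vv l) = cinner (vv l) (\<i> *s vv m)" using lm by simp
      then have "cinner (vv l) (vv l) = 0" using orth_gen'(3)[OF lm(1,2) False] by simp
      then show False using vv lm cinner_self_eq_0 by metis
    qed
  qed
  have f1: "finite W1s" "finite W2s" using fin by auto
  have finS: "finite (spec M)" using f1(1) inj1 unfolding W1s_def using finite_imageD by blast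
  have "card (W1s \<union> W2s) = card W1s + card W2s" using card_Un_disjoint[OF f1 disj] .
  also have "... = 2 * card (spec M)" using card_image[OF inj1] card_image[OF inj2]
    by (simp add: W1s_def W2s_def)
  finally show ?thesis using cardW finS by simp
qed



definition margs :: "real set \<Rightarrow> real set \<Rightarrow> (real \<Rightarrow> real) \<Rightarrow> (real \<Rightarrow> real) \<Rightarrow> (real \<times> real \<Rightarrow> real) \<Rightarrow> bool" where
  "margs X Y p q c \<longleftrightarrow> (\<forall>a\<in>X. (\<Sum>b\<in>Y. c (a,b)) = p a) \<and> (\<forall>b\<in>Y. (\<Sum>a\<in>X. c (a,b)) = q b)"

definition tcost :: "real set \<Rightarrow> real set \<Rightarrow> (real \<times> real \<Rightarrow> real) \<Rightarrow> real" where
  "tcost X Y c = (\<Sum>z\<in>X \<times> Y. \<bar>c z\<bar> * \<bar>fst z - snd z\<bar>)"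

definition negs :: "real set \<Rightarrow> real set \<Rightarrow> (real \<times> real \<Rightarrow> real) \<Rightarrow> (real \<times> real) set" where
  "negs X Y c = {z \<in> X \<times> Y. c z < 0}"

definition dlt :: "real \<times> real \<Rightarrow> real \<times> real \<Rightarrow> real" where
  "dlt w z = (if z = w then 1 else 0)"

lemma sum_dlt_row: "finite Y \<Longrightarrow> w \<in> Y \<Longrightarrow> (\<Sum>b\<in>Y. dlt (u,w) (a,b)) = (if a = u then 1 else 0)"
  by (cases "a = u") (simp_all add: dlt_def)
lemma sum_dlt_col: "finite X \<Longrightarrow> u \<in> X \<Longrightarrow> (\<Sum>a\<in>X. dlt (u,w) (a,b)) = (if b = w then 1 else 0)"
  by (cases "b = w") (simp_all add: dlt_def)
lemma sum_dlt_mult: "finite S \<Longrightarrow> w \<in> S \<Longrightarrow> (\<Sum>z\<in>S. dlt w z * r) = r"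
proof -
  assume a: "finite S" "w \<in> S"
  have "(\<Sum>z\<in>S. dlt w z * r) = (\<Sum>z\<in>S. if z = w then r else 0)"
    by (intro sum.cong) (auto simp: dlt_def)
  then show ?thesis using a by simp
qed

lemma pos_in_row:
  fixes c :: "real \<times> real \<Rightarrow> real"
  assumes "finite Y" "j \<in> Y" "c (i,j) < 0" "(\<Sum>b\<in>Y. c (i,b)) \<ge> 0"
  shows "\<exists>k\<in>Y. c (i,k) > 0"
proof (rule ccontr)
  assume "\<not> ?thesis"
  then have le: "\<forall>b\<in>Y - {j}. c (i,b) \<le> 0"
  proof (intro ballI)
    fix b assume "b \<in> Y - {j}" "\<not> (\<exists>k\<in>Y. c (i,k) > 0)"
    then have "\<not> c (i,b) > 0" by blast
    then show "c (i,b) \<le> 0" by simp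
  qed
  have "(\<Sum>b\<in>Y. c (i,b)) = c (i,j) + (\<Sum>b\<in>Y - {j}. c (i,b))"
    using assms by (simp add: sum.remove)
  also have "... < 0"
  proof -
    have "(\<Sum>b\<in>Y - {j}. c (i,b)) \<le> 0" using le by (intro sum_nonpos) auto
    then show ?thesis using assms(3) by linarith
  qed
  finally show False using assms(4) by simp
qed

lemma pos_in_col:
  fixes c :: "real \<times> real \<Rightarrow> real"
  assumes "finite X" "i \<in> X" "c (i,j) < 0" "(\<Sum>a\<in>X. c (a,j)) \<ge> 0"
  shows "\<exists>l\<in>X. c (l,j) > 0"
proof (rule ccontr)
  assume "\<not> ?thesis"
  then have le: "\<forall>a\<in>X - {i}. c (a,j) \<le> 0"
  proof (intro ballI)
    fix a assume "a \<in> X - {i}" "\<not> (\<exists>l\<in>X. c (l,j) > 0)"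
    then have "\<not> c (a,j) > 0" by blast
    then show "c (a,j) \<le> 0" by simp
  qed
  have "(\<Sum>a\<in>X. c (a,j)) = c (i,j) + (\<Sum>a\<in>X - {i}. c (a,j))"
    using assms by (simp add: sum.remove)
  also have "... < 0"
  proof -
    have "(\<Sum>a\<in>X - {i}. c (a,j)) \<le> 0" using le by (intro sum_nonpos) auto
    then show ?thesis using assms(3) by linarith
  qed
  finally show False using assms(4) by simp
qed

lemma fix_entry:
  assumes fin: "finite X" "finite Y" and pn: "\<forall>a\<in>X. p a \<ge> 0" and qn: "\<forall>b\<in>Y. q b \<ge> 0"
  shows "margs X Y p q c \<Longrightarrow> i \<in> X \<Longrightarrow> j \<in> Y \<Longrightarrow> c (i,j) < 0 \<Longrightarrow>
    \<exists>c'. margs X Y p q c' \<and> tcost X Y c' \<le> tcost X Y c \<and> negs X Y c' \<subseteq> negs X Y c - {(i,j)}"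
proof (induction "card {k\<in>Y. c (i,k) > 0} + card {l\<in>X. c (l,j) > 0}" arbitrary: c rule: less_induct)
  case less
  note mc = less.prems(1) and i = less.prems(2) and j = less.prems(3) and cij = less.prems(4)
  have rs: "(\<Sum>b\<in>Y. c (i,b)) \<ge> 0" using mc pn i by (simp add: margs_def)
  have cs: "(\<Sum>a\<in>X. c (a,j)) \<ge> 0" using mc qn j by (simp add: margs_def)
  obtain k where k: "k \<in> Y" "c (i,k) > 0" using pos_in_row[OF fin(2) j cij rs] by blast
  obtain l where l: "l \<in> X" "c (l,j) > 0" using pos_in_col[OF fin(1) i cij cs] by blast
  have jk: "j \<noteq> k" using k cij by auto
  have il: "i \<noteq> l" using l cij by auto
  define eps where "eps = min (- c (i,j)) (min (c (i,k)) (c (l,j)))"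
  have eps: "eps > 0" "eps \<le> - c (i,j)" "eps \<le> c (i,k)" "eps \<le> c (l,j)"
    using cij k l by (auto simp: eps_def)
  define e where "e z = dlt (i,j) z - dlt (i,k) z - dlt (l,j) z + dlt (l,k) z" for z
  define c1 where "c1 z = c z + eps * e z" for z
  have c1ij: "c1 (i,j) = c (i,j) + eps" using jk il by (simp add: c1_def e_def dlt_def)
  have c1ik: "c1 (i,k) = c (i,k) - eps" using jk il by (simp add: c1_def e_def dlt_def)
  have c1lj: "c1 (l,j) = c (l,j) - eps" using jk il by (simp add: c1_def e_def dlt_def)
  have c1lk: "c1 (l,k) = c (l,k) + eps" using jk il by (simp add: c1_def e_def dlt_def)
  have c1o: "c1 z = c z" if "z \<noteq> (i,j)" "z \<noteq> (i,k)" "z \<noteq> (l,j)" "z \<noteq> (l,k)" for z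
    using that by (simp add: c1_def e_def dlt_def)
  have m1: "margs X Y p q c1"
    unfolding margs_def
  proof (intro conjI ballI)
    fix a assume a: "a \<in> X"
    have "(\<Sum>b\<in>Y. c1 (a,b)) = (\<Sum>b\<in>Y. c (a,b)) + eps * (\<Sum>b\<in>Y. e (a,b))"
      by (simp add: c1_def sum.distrib sum_distrib_left)
    also have "(\<Sum>b\<in>Y. e (a,b)) = (\<Sum>b\<in>Y. dlt (i,j) (a,b)) - (\<Sum>b\<in>Y. dlt (i,k) (a,b))
       - (\<Sum>b\<in>Y. dlt (l,j) (a,b)) + (\<Sum>b\<in>Y. dlt (l,k) (a,b))"
      by (simp add: e_def sum.distrib sum_subtractf)
    also have "... = 0" using fin j k by (simp add: sum_dlt_row)
    finally have "(\<Sum>b\<in>Y. c1 (a,b)) = (\<Sum>b\<in>Y. c (a,b))" by simp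
    then show "(\<Sum>b\<in>Y. c1 (a,b)) = p a" using mc a by (simp add: margs_def)
  next
    fix b assume b: "b \<in> Y"
    have "(\<Sum>a\<in>X. c1 (a,b)) = (\<Sum>a\<in>X. c (a,b)) + eps * (\<Sum>a\<in>X. e (a,b))"
      by (simp add: c1_def sum.distrib sum_distrib_left)
    also have "(\<Sum>a\<in>X. e (a,b)) = (\<Sum>a\<in>X. dlt (i,j) (a,b)) - (\<Sum>a\<in>X. dlt (i,k) (a,b))
       - (\<Sum>a\<in>X. dlt (l,j) (a,b)) + (\<Sum>a\<in>X. dlt (l,k) (a,b))"
      by (simp add: e_def sum.distrib sum_subtractf)
    also have "... = 0" using fin i l by (simp add: sum_dlt_col)
    finally have "(\<Sum>a\<in>X. c1 (a,b)) = (\<Sum>a\<in>X. c (a,b))" by simp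
    then show "(\<Sum>a\<in>X. c1 (a,b)) = q b" using mc b by (simp add: margs_def)
  qed
  define d where "d z = \<bar>fst z - snd z\<bar>" for z :: "real \<times> real"
  define w where "w z = dlt (i,j) z * (- d (i,j)) + dlt (i,k) z * (- d (i,k)) + dlt (l,j) z * (- d (l,j))
     + dlt (l,k) z * d (l,k)" for z
  have pw: "\<bar>c1 z\<bar> * d z \<le> \<bar>c z\<bar> * d z + eps * w z" for z
  proof -
    have d0: "d z \<ge> 0" by (simp add: d_def)
    consider "z = (i,j)" | "z = (i,k)" | "z = (l,j)" | "z = (l,k)"
      | "z \<noteq> (i,j)" "z \<noteq> (i,k)" "z \<noteq> (l,j)" "z \<noteq> (l,k)" by blast
    then show ?thesis
    proof cases
      case 1
      have "\<bar>c1 z\<bar> = \<bar>c z\<bar> - eps" using 1 c1ij eps cij by simp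
      moreover have "w z = - d z" using 1 jk il by (simp add: w_def dlt_def)
      ultimately show ?thesis by (simp add: left_diff_distrib)
    next
      case 2
      have "\<bar>c1 z\<bar> = \<bar>c z\<bar> - eps" using 2 c1ik eps k by simp
      moreover have "w z = - d z" using 2 jk il by (simp add: w_def dlt_def)
      ultimately show ?thesis by (simp add: left_diff_distrib)
    next
      case 3
      have "\<bar>c1 z\<bar> = \<bar>c z\<bar> - eps" using 3 c1lj eps l by simp
      moreover have "w z = - d z" using 3 jk il by (simp add: w_def dlt_def)
      ultimately show ?thesis by (simp add: left_diff_distrib)
    next
      case 4
      have "\<bar>c1 z\<bar> \<le> \<bar>c z\<bar> + eps" using 4 c1lk eps by simp
      moreover have "w z = d z" using 4 jk il by (simp add: w_def dlt_def)
      moreover have "\<bar>c1 z\<bar> * d z \<le> (\<bar>c z\<bar> + eps) * d z"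
        using calculation(1) d0 by (rule mult_right_mono)
      ultimately show ?thesis by (simp add: distrib_right)
    next
      case 5
      then show ?thesis using c1o[OF 5] by (simp add: w_def dlt_def)
    qed
  qed
  have XY: "(i,j) \<in> X \<times> Y" "(i,k) \<in> X \<times> Y" "(l,j) \<in> X \<times> Y" "(l,k) \<in> X \<times> Y"
    using i j k l by auto
  have finXY: "finite (X \<times> Y)" using fin by simp
  have sw: "(\<Sum>z\<in>X \<times> Y. w z) = - d (i,j) - d (i,k) - d (l,j) + d (l,k)"
    unfolding w_def sum.distrib sum_dlt_mult[OF finXY XY(1)] sum_dlt_mult[OF finXY XY(2)]
      sum_dlt_mult[OF finXY XY(3)] sum_dlt_mult[OF finXY XY(4)] by simp
  have tri: "d (l,k) \<le> d (i,j) + d (i,k) + d (l,j)" by (simp add: d_def)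
  have "tcost X Y c1 = (\<Sum>z\<in>X \<times> Y. \<bar>c1 z\<bar> * d z)" by (simp add: tcost_def d_def)
  also have "... \<le> (\<Sum>z\<in>X \<times> Y. \<bar>c z\<bar> * d z + eps * w z)" by (rule sum_mono) (rule pw)
  also have "... = tcost X Y c + eps * (\<Sum>z\<in>X \<times> Y. w z)"
    by (simp add: tcost_def d_def sum.distrib sum_distrib_left)
  also have "... \<le> tcost X Y c" using sw tri eps(1)
    by (simp add: mult_le_0_iff)
  finally have cost1: "tcost X Y c1 \<le> tcost X Y c" .
  have neg1: "negs X Y c1 \<subseteq> negs X Y c"
  proof
    fix z assume z: "z \<in> negs X Y c1"
    then have zXY: "z \<in> X \<times> Y" and c1z: "c1 z < 0" by (auto simp: negs_def)
    have "c z < 0"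
    proof -
      consider "z = (i,j)" | "z = (i,k)" | "z = (l,j)" | "z = (l,k)"
        | "z \<noteq> (i,j)" "z \<noteq> (i,k)" "z \<noteq> (l,j)" "z \<noteq> (l,k)" by blast
      then show ?thesis
      proof cases
        case 1 then show ?thesis using cij by simp
      next
        case 2 then show ?thesis using c1z c1ik eps by simp
      next
        case 3 then show ?thesis using c1z c1lj eps by simp
      next
        case 4 then show ?thesis using c1z c1lk eps by simp
      next
        case 5 then show ?thesis using c1z c1o[OF 5] by simp
      qed
    qed
    then show "z \<in> negs X Y c" using zXY by (simp add: negs_def)
  qed
  show ?case
  proof (cases "c1 (i,j) < 0")
    case False
    then have "negs X Y c1 \<subseteq> negs X Y c - {(i,j)}" using neg1 by (auto simp: negs_def)
    then show ?thesis using m1 cost1 by blast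
  next
    case True
    have rowsub: "{k'\<in>Y. c1 (i,k') > 0} \<subseteq> {k'\<in>Y. c (i,k') > 0}"
    proof
      fix k' assume "k' \<in> {k'\<in>Y. c1 (i,k') > 0}"
      then have k': "k' \<in> Y" "c1 (i,k') > 0" by auto
      have "k' \<noteq> j" using True k' by auto
      then have "c (i,k') \<ge> c1 (i,k')" using c1ik c1o[of "(i,k')"] eps il by (cases "k' = k") auto
      then show "k' \<in> {k'\<in>Y. c (i,k') > 0}" using k' by auto
    qed
    have colsub: "{l'\<in>X. c1 (l',j) > 0} \<subseteq> {l'\<in>X. c (l',j) > 0}"
    proof
      fix l' assume "l' \<in> {l'\<in>X. c1 (l',j) > 0}"
      then have l': "l' \<in> X" "c1 (l',j) > 0" by auto
      have "l' \<noteq> i" using True l' by auto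
      then have "c (l',j) \<ge> c1 (l',j)" using c1lj c1o[of "(l',j)"] eps jk by (cases "l' = l") auto
      then show "l' \<in> {l'\<in>X. c (l',j) > 0}" using l' by auto
    qed
    have "c1 (i,k) = 0 \<or> c1 (l,j) = 0"
      using True c1ij c1ik c1lj unfolding eps_def by (auto simp: min_def split: if_splits)
    then have "card {k'\<in>Y. c1 (i,k') > 0} + card {l'\<in>X. c1 (l',j) > 0}
        < card {k'\<in>Y. c (i,k') > 0} + card {l'\<in>X. c (l',j) > 0}"
    proof
      assume "c1 (i,k) = 0"
      then have "k \<notin> {k'\<in>Y. c1 (i,k') > 0}" by simp
      moreover have "k \<in> {k'\<in>Y. c (i,k') > 0}" using k by simp
      ultimately have "{k'\<in>Y. c1 (i,k') > 0} \<subset> {k'\<in>Y. c (i,k') > 0}" using rowsub by blast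
      then have "card {k'\<in>Y. c1 (i,k') > 0} < card {k'\<in>Y. c (i,k') > 0}"
        using fin by (intro psubset_card_mono) auto
      moreover have "card {l'\<in>X. c1 (l',j) > 0} \<le> card {l'\<in>X. c (l',j) > 0}"
        using colsub fin by (intro card_mono) auto
      ultimately show ?thesis by linarith
    next
      assume "c1 (l,j) = 0"
      then have "l \<notin> {l'\<in>X. c1 (l',j) > 0}" by simp
      moreover have "l \<in> {l'\<in>X. c (l',j) > 0}" using l by simp
      ultimately have "{l'\<in>X. c1 (l',j) > 0} \<subset> {l'\<in>X. c (l',j) > 0}" using colsub by blast
      then have "card {l'\<in>X. c1 (l',j) > 0} < card {l'\<in>X. c (l',j) > 0}"
        using fin by (intro psubset_card_mono) auto
      moreover have "card {k'\<in>Y. c1 (i,k') > 0} \<le> card {k'\<in>Y. c (i,k') > 0}"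
        using rowsub fin by (intro card_mono) auto
      ultimately show ?thesis by linarith
    qed
    from less.hyps[OF this m1 i j True] obtain c2 where
      c2: "margs X Y p q c2" "tcost X Y c2 \<le> tcost X Y c1" "negs X Y c2 \<subseteq> negs X Y c1 - {(i,j)}" by blast
    then show ?thesis using cost1 neg1 by (intro exI[of _ c2]) auto
  qed
qed

lemma signed_to_coupling:
  assumes fin: "finite X" "finite Y" and pn: "\<forall>a\<in>X. p a \<ge> 0" and qn: "\<forall>b\<in>Y. q b \<ge> 0"
  shows "margs X Y p q c \<Longrightarrow> \<exists>\<pi>. (\<forall>z. \<pi> z \<ge> 0) \<and> margs X Y p q \<pi> \<and> tcost X Y \<pi> \<le> tcost X Y c"
proof (induction "card (negs X Y c)" arbitrary: c rule: less_induct)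
  case less
  have finN: "finite (negs X Y c)" using fin by (auto simp: negs_def intro: finite_subset[of _ "X \<times> Y"])
  show ?case
  proof (cases "negs X Y c = {}")
    case True
    define \<pi> where "\<pi> z = (if z \<in> X \<times> Y then c z else 0)" for z
    have "\<forall>z. \<pi> z \<ge> 0" using True by (auto simp: \<pi>_def negs_def not_less)
    moreover have "margs X Y p q \<pi>" using less.prems by (simp add: margs_def \<pi>_def)
    moreover have "tcost X Y \<pi> = tcost X Y c" by (simp add: tcost_def \<pi>_def)
    ultimately show ?thesis by (intro exI[of _ \<pi>]) auto
  next
    case False
    then obtain i j where ij: "(i,j) \<in> negs X Y c" by auto
    then have "i \<in> X" "j \<in> Y" "c (i,j) < 0" by (auto simp: negs_def)
    from fix_entry[OF fin pn qn less.prems this] obtain c' where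
      c': "margs X Y p q c'" "tcost X Y c' \<le> tcost X Y c" "negs X Y c' \<subseteq> negs X Y c - {(i,j)}" by blast
    have "negs X Y c' \<subset> negs X Y c" using c'(3) ij by blast
    then have "card (negs X Y c') < card (negs X Y c)"
      using finN by (rule psubset_card_mono[rotated])
    from less.hyps[OF this c'(1)] obtain \<pi> where "\<forall>z. \<pi> z \<ge> 0" "margs X Y p q \<pi>" "tcost X Y \<pi> \<le> tcost X Y c'"
      by blast
    then show ?thesis using c'(2) by (intro exI[of _ \<pi>]) simp
  qed
qed



lemma proj_in: "hermitian M \<Longrightarrow> eigproj M l f \<in> eigenspace M l"
  using proj_props by blast
lemma proj_orth: "hermitian M \<Longrightarrow> v \<in> eigenspace M l \<Longrightarrow> cinner v (f - eigproj M l f) = 0"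
  using proj_props by blast

lemma proj_norm:
  assumes "hermitian M"
  shows "Re (cinner f (eigproj M l f)) = (norm (eigproj M l f))\<^sup>2"
proof -
  define P where "P = eigproj M l f"
  have "cinner P (f - P) = 0" using proj_orth[OF assms proj_in[OF assms]] by (simp add: P_def)
  then have "cinner (f - P) P = 0" by (metis cinner_commute complex_cnj_zero)
  then have "cinner f P = cinner P P" by (simp add: cinner_diff_left)
  then show ?thesis by (simp add: P_def cinner_self)
qed

lemma ps_nonneg: "hermitian M \<Longrightarrow> power_spectrum M f l \<ge> 0"
  by (simp add: power_spectrum_def proj_norm)

lemma ps_zero_proj:
  assumes "hermitian M" "power_spectrum M f l = 0"
  shows "eigproj M l f = 0"
proof (cases "l \<in> spec M")
  case True
  then have "(norm (eigproj M l f))\<^sup>2 = 0" using assms by (simp add: power_spectrum_def proj_norm)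
  then show ?thesis by simp
next
  case False
  then show ?thesis using not_spec_eig proj_in[OF assms(1)] by blast
qed

lemma sum_proj:
  fixes M :: "complex^'n^'n"
  assumes herm: "hermitian M"
  shows "(\<Sum>l\<in>spec M. eigproj M l f) = f"
proof -
  obtain L x where Lx: "finite L" "\<forall>l. x l \<in> eigenspace M l" "f = (\<Sum>l\<in>L. x l)"
    using decomp_exists[OF herm] by blast
  have finS: "finite (spec M)" using spec_finite_card[OF herm] by simp
  have "(\<Sum>l\<in>spec M. eigproj M l f) = (\<Sum>l\<in>spec M. if l \<in> L then x l else 0)"
    using proj_char[OF herm Lx] by simp
  also have "... = (\<Sum>l\<in>spec M \<inter> L. x l)"
    using finS by (simp add: sum.inter_restrict)
  also have "... = (\<Sum>l\<in>L. x l)"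
  proof (rule sum.mono_neutral_left[OF Lx(1)])
    show "spec M \<inter> L \<subseteq> L" by blast
    show "\<forall>i\<in>L - spec M \<inter> L. x i = 0" using not_spec_eig Lx(2) by blast
  qed
  finally show ?thesis using Lx(3) by simp
qed

lemma ps_sum_sq:
  fixes M :: "complex^'n^'n"
  assumes herm: "hermitian M"
  shows "(\<Sum>l\<in>spec M. (norm (eigproj M l f))\<^sup>2) = (norm f)\<^sup>2"
proof -
  have finS: "finite (spec M)" using spec_finite_card[OF herm] by simp
  have "(\<Sum>l\<in>spec M. (norm (eigproj M l f))\<^sup>2) = (\<Sum>l\<in>spec M. Re (cinner f (eigproj M l f)))"
    using proj_norm[OF herm] by simp
  also have "... = Re (cinner f (\<Sum>l\<in>spec M. eigproj M l f))"
    using finS by (simp add: cinner_sum_right Re_sum)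
  also have "... = (norm f)\<^sup>2" using sum_proj[OF herm] by (simp add: cinner_self)
  finally show ?thesis .
qed

lemma sum_norm_proj:
  fixes M :: "complex^'n^'n"
  assumes herm: "hermitian M" and nf: "norm f = 1"
  shows "(\<Sum>l\<in>spec M. norm (eigproj M l f)) \<le> sqrt (real CARD('n))"
proof -
  have "(\<Sum>l\<in>spec M. norm (eigproj M l f)) = (\<Sum>l\<in>spec M. \<bar>norm (eigproj M l f)\<bar> * \<bar>1\<bar>)" by simp
  also have "... \<le> L2_set (\<lambda>l. norm (eigproj M l f)) (spec M) * L2_set (\<lambda>l. 1) (spec M)"
    by (rule L2_set_mult_ineq)
  also have "L2_set (\<lambda>l. norm (eigproj M l f)) (spec M) = 1"
    using ps_sum_sq[OF herm, of f] nf by (simp add: L2_set_def)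
  also have "L2_set (\<lambda>l. 1::real) (spec M) = sqrt (real (card (spec M)))"
    by (simp add: L2_set_constant)
  also have "... \<le> sqrt (real CARD('n))" using spec_finite_card[OF herm] by simp
  finally show ?thesis by simp
qed

lemma pair_bound:
  fixes H \<Delta> :: "complex^'n^'n"
  assumes hH: "hermitian H" and hB: "hermitian (H + t *\<^sub>R \<Delta>)"
  shows "\<bar>Re (cinner (eigproj H a f) (eigproj (H + t *\<^sub>R \<Delta>) b f))\<bar> * \<bar>a - b\<bar>
    \<le> \<bar>t\<bar> * spec_norm \<Delta> * (norm (eigproj H a f) * norm (eigproj (H + t *\<^sub>R \<Delta>) b f))"
proof -
  define P where "P = eigproj H a f"
  define Q where "Q = eigproj (H + t *\<^sub>R \<Delta>) b f"
  have PE: "H *v P = complex_of_real a *s P" using proj_in[OF hH] by (simp add: P_def eigenspace_def)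
  have QE: "(H + t *\<^sub>R \<Delta>) *v Q = complex_of_real b *s Q" using proj_in[OF hB] by (simp add: Q_def eigenspace_def)
  have QE': "H *v Q + t *\<^sub>R (\<Delta> *v Q) = complex_of_real b *s Q" using QE by (simp add: mv_madd mv_mscaleR)
  have e1: "cinner P (H *v Q) = complex_of_real a * cinner P Q"
    using hermitian_cinner[OF hH, of P Q] PE by (simp add: cinner_scale_left)
  have "cinner P (H *v Q) + complex_of_real t * cinner P (\<Delta> *v Q) = complex_of_real b * cinner P Q"
    using arg_cong[OF QE', of "cinner P"] by (simp add: cinner_add_right cinner_scaleR_right cinner_scale_right)
  then have "complex_of_real (b - a) * cinner P Q = complex_of_real t * cinner P (\<Delta> *v Q)"
    using e1 by (simp add: algebra_simps)
  then have "\<bar>b - a\<bar> * cmod (cinner P Q) = \<bar>t\<bar> * cmod (cinner P (\<Delta> *v Q))"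
    by (metis norm_mult norm_of_real)
  also have "... \<le> \<bar>t\<bar> * (norm P * norm (\<Delta> *v Q))"
    by (intro mult_left_mono cinner_cauchy) simp
  also have "... \<le> \<bar>t\<bar> * (norm P * (spec_norm \<Delta> * norm Q))"
    unfolding spec_norm_def
    by (intro mult_left_mono onorm[OF mv_bounded_linear]) simp_all
  finally have *: "\<bar>b - a\<bar> * cmod (cinner P Q) \<le> \<bar>t\<bar> * spec_norm \<Delta> * (norm P * norm Q)"
    by (simp add: algebra_simps)
  have "\<bar>Re (cinner P Q)\<bar> * \<bar>a - b\<bar> \<le> cmod (cinner P Q) * \<bar>a - b\<bar>"
    by (intro mult_right_mono abs_Re_le_cmod) simp
  also have "... = \<bar>b - a\<bar> * cmod (cinner P Q)" by (simp add: abs_minus_commute mult.commute)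
  finally show ?thesis using * by (simp add: P_def Q_def)
qed



lemma W1_bound:
  fixes H \<Delta> :: "complex^'n^'n" and f :: "complex^'n"
  assumes hH: "hermitian H" and hD: "hermitian \<Delta>" and nf: "norm f = 1"
  shows "W1 (power_spectrum H f) (power_spectrum (H + t *\<^sub>R \<Delta>) f)
    \<le> real CARD('n) * spec_norm \<Delta> * \<bar>t\<bar>"
proof -
  define B where "B = H + t *\<^sub>R \<Delta>"
  have hB: "hermitian B" unfolding B_def by (intro hermitian_add hermitian_scaleR hH hD)
  define p where "p = power_spectrum H f"
  define q where "q = power_spectrum B f"
  define P where "P a = eigproj H a f" for a
  define Q where "Q b = eigproj B b f" for b
  define SA where "SA = spec H"
  define SB where "SB = spec B"
  define X where "X = {x. p x \<noteq> 0}"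
  define Y where "Y = {x. q x \<noteq> 0}"
  have finSA: "finite SA" and cardSA: "card SA \<le> CARD('n)" using spec_finite_card[OF hH] by (simp_all add: SA_def)
  have finSB: "finite SB" and cardSB: "card SB \<le> CARD('n)" using spec_finite_card[OF hB] by (simp_all add: SB_def)
  have XSA: "X \<subseteq> SA" by (auto simp: X_def SA_def p_def power_spectrum_def split: if_splits)
  have YSB: "Y \<subseteq> SB" by (auto simp: Y_def SB_def q_def power_spectrum_def split: if_splits)
  have finX: "finite X" using finite_subset[OF XSA finSA] .
  have finY: "finite Y" using finite_subset[OF YSB finSB] .
  have P0: "P a = 0" if "a \<notin> X" for a using ps_zero_proj[OF hH] that by (simp add: X_def P_def p_def)
  have Q0: "Q b = 0" if "b \<notin> Y" for b using ps_zero_proj[OF hB] that by (simp add: Y_def Q_def q_def)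
  define c where "c z = Re (cinner (P (fst z)) (Q (snd z)))" for z
  have sumP: "(\<Sum>a\<in>SA. P a) = f" using sum_proj[OF hH] by (simp add: SA_def P_def)
  have sumQ: "(\<Sum>b\<in>SB. Q b) = f" using sum_proj[OF hB] by (simp add: SB_def Q_def)
  have marg: "margs X Y p q c"
    unfolding margs_def
  proof (intro conjI ballI)
    fix a assume a: "a \<in> X"
    have "(\<Sum>b\<in>Y. c (a,b)) = (\<Sum>b\<in>SB. c (a,b))"
      by (rule sum.mono_neutral_left[OF finSB YSB]) (auto simp: c_def Q0)
    also have "... = Re (cinner (P a) (\<Sum>b\<in>SB. Q b))"
      using finSB by (simp add: c_def cinner_sum_right Re_sum)
    also have "... = Re (cinner f (P a))" unfolding sumQ by (subst cinner_commute) simp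
    also have "... = p a" using a XSA by (auto simp: p_def power_spectrum_def SA_def P_def)
    finally show "(\<Sum>b\<in>Y. c (a,b)) = p a" .
  next
    fix b assume b: "b \<in> Y"
    have "(\<Sum>a\<in>X. c (a,b)) = (\<Sum>a\<in>SA. c (a,b))"
      by (rule sum.mono_neutral_left[OF finSA XSA]) (auto simp: c_def P0)
    also have "... = Re (cinner (\<Sum>a\<in>SA. P a) (Q b))"
      using finSA by (simp add: c_def cinner_sum_left Re_sum)
    also have "... = q b" unfolding sumP using b YSB by (auto simp: q_def power_spectrum_def SB_def Q_def)
    finally show "(\<Sum>a\<in>X. c (a,b)) = q b" .
  qed
  have pn: "\<forall>a\<in>X. p a \<ge> 0" using ps_nonneg[OF hH] by (simp add: p_def)
  have qn: "\<forall>b\<in>Y. q b \<ge> 0" using ps_nonneg[OF hB] by (simp add: q_def)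
  obtain \<pi> where pi: "\<forall>z. \<pi> z \<ge> 0" "margs X Y p q \<pi>" "tcost X Y \<pi> \<le> tcost X Y c"
    using signed_to_coupling[OF finX finY pn qn marg] by blast
  define C where "C = {(\<Sum>(a,b)\<in>{x. p x \<noteq> 0} \<times> {x. q x \<noteq> 0}. \<pi> (a,b) * \<bar>a - b\<bar>) | \<pi>.
      (\<forall>z. 0 \<le> \<pi> z) \<and>
      (\<forall>a. p a \<noteq> 0 \<longrightarrow> (\<Sum>b\<in>{x. q x \<noteq> 0}. \<pi> (a,b)) = p a) \<and>
      (\<forall>b. q b \<noteq> 0 \<longrightarrow> (\<Sum>a\<in>{x. p x \<noteq> 0}. \<pi> (a,b)) = q b)}"
  have W: "W1 p q = Inf C" by (simp add: W1_def C_def)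
  have tpi: "tcost X Y \<pi> = (\<Sum>(a,b)\<in>X \<times> Y. \<pi> (a,b) * \<bar>a - b\<bar>)"
    unfolding tcost_def using pi(1) by (intro sum.cong refl) (auto simp: abs_of_nonneg)
  have inC: "tcost X Y \<pi> \<in> C"
    unfolding C_def tpi using pi(1,2) by (auto simp: X_def Y_def margs_def)
  have bdd: "bdd_below C"
    unfolding C_def by (rule bdd_belowI[of _ 0]) (auto intro!: sum_nonneg)
  have "W1 p q \<le> tcost X Y \<pi>" unfolding W by (rule cInf_lower[OF inC bdd])
  also have "... \<le> tcost X Y c" by (rule pi(3))
  also have "... \<le> (\<Sum>z\<in>SA \<times> SB. \<bar>c z\<bar> * \<bar>fst z - snd z\<bar>)"
    unfolding tcost_def using XSA YSB finSA finSB by (intro sum_mono2) auto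
  also have "... \<le> (\<Sum>z\<in>SA \<times> SB. \<bar>t\<bar> * spec_norm \<Delta> * (norm (P (fst z)) * norm (Q (snd z))))"
    by (intro sum_mono) (unfold c_def P_def Q_def B_def, rule pair_bound[OF hH hB[unfolded B_def]])
  also have "... = \<bar>t\<bar> * spec_norm \<Delta> * ((\<Sum>a\<in>SA. norm (P a)) * (\<Sum>b\<in>SB. norm (Q b)))"
  proof -
    have "(\<Sum>z\<in>SA \<times> SB. \<bar>t\<bar> * spec_norm \<Delta> * (norm (P (fst z)) * norm (Q (snd z))))
        = \<bar>t\<bar> * spec_norm \<Delta> * (\<Sum>z\<in>SA \<times> SB. norm (P (fst z)) * norm (Q (snd z)))"
      by (simp add: sum_distrib_left)
    also have "(\<Sum>z\<in>SA \<times> SB. norm (P (fst z)) * norm (Q (snd z))) = (\<Sum>a\<in>SA. \<Sum>b\<in>SB. norm (P a) * norm (Q b))"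
      by (simp add: sum.cartesian_product split_def)
    also have "... = (\<Sum>a\<in>SA. norm (P a)) * (\<Sum>b\<in>SB. norm (Q b))"
      by (simp add: sum_product)
    finally show ?thesis .
  qed
  also have "... \<le> \<bar>t\<bar> * spec_norm \<Delta> * (sqrt (real CARD('n)) * sqrt (real CARD('n)))"
  proof (intro mult_left_mono mult_mono)
    show "(\<Sum>a\<in>SA. norm (P a)) \<le> sqrt (real CARD('n))"
      using sum_norm_proj[OF hH nf] by (simp add: SA_def P_def)
    show "(\<Sum>b\<in>SB. norm (Q b)) \<le> sqrt (real CARD('n))"
      using sum_norm_proj[OF hB nf] by (simp add: SB_def Q_def)
    show "0 \<le> sqrt (real CARD('n))" by simp
    show "0 \<le> (\<Sum>b\<in>SB. norm (Q b))" by (simp add: sum_nonneg)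
    show "0 \<le> \<bar>t\<bar> * spec_norm \<Delta>"
      unfolding spec_norm_def using onorm_pos_le[OF mv_bounded_linear, of \<Delta>] by simp
  qed
  also have "... = real CARD('n) * spec_norm \<Delta> * \<bar>t\<bar>" by simp
  finally show ?thesis by (simp add: p_def q_def B_def)
qed

theorem proposition3p10:
  fixes H \<Delta> :: "complex^'n^'n" and f :: "complex^'n"
  assumes "hermitian H" and "hermitian \<Delta>" and "norm f = 1"
  shows "\<exists>g. g \<in> O[at (0::real)](\<lambda>t. (t * spec_norm \<Delta>)\<^sup>2) \<and>
    (\<forall>\<^sub>F t in at (0::real).
       spec_norm \<Delta> * \<bar>t\<bar> < gap H / 2 \<longrightarrow>
       W1 (power_spectrum H f) (power_spectrum (H + t *\<^sub>R \<Delta>) f)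
         \<le> real CARD('n) * spec_norm \<Delta> * \<bar>t\<bar> + g t)"
proof (intro exI[of _ "\<lambda>_. 0"] conjI)
  show "(\<lambda>_. 0::real) \<in> O[at (0::real)](\<lambda>t. (t * spec_norm \<Delta>)\<^sup>2)" by simp
  show "\<forall>\<^sub>F t in at (0::real). spec_norm \<Delta> * \<bar>t\<bar> < gap H / 2 \<longrightarrow>
       W1 (power_spectrum H f) (power_spectrum (H + t *\<^sub>R \<Delta>) f)
         \<le> real CARD('n) * spec_norm \<Delta> * \<bar>t\<bar> + 0"
    using W1_bound[OF assms] by (intro always_eventually allI impI) simp
qed

end
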